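(* Let $n$ be a positive integer with prime factorisation $n=2^{k_0}p_1^{k_1}\cdots p_r^{k_r}$, where $p_1,\dots,p_r$ are distinct odd primes, $k_0\geq 0$ and $k_1,\dots,k_r\geq 1$. Then \[ t_{\mathrm{aff}}(n)=n-\sum_{\substack{0\leq m_i\leq k_i\\ i=0,\ldots,r}}\frac{\varphi(2^{m_0})\varphi(p_1^{m_1})\cdots\varphi(p_r^{m_r})}{\operatorname{lcm}\{\lambda(2^{m_0}),\varphi(p_1^{m_1}),\ldots,\varphi(p_r^{m_r})\}}. \]
   Context: $S(\mathbb{Z}_n)$ is the set of bijections $\mathbb{Z}_n\to\mathbb{Z}_n$. For $\pi\in S(\mathbb{Z}_n)$, $\mathrm{cyc}(\pi)$ is the number of cycles (including fixed points) of $\pi$, $t(\pi)=n-\mathrm{cyc}(\pi)$, $[\pi]=\{x\mapsto \pi(x+b): b\in\mathbb{Z}_n\}$ and $t([\pi])=\min_{\sigma\in[\pi]}t(\sigma)$. A permutation is affine if it has the form $x\mapsto ax+b$ with $a\in\mathbb{Z}_n^\times$, $b\in\mathbb{Z}_n$, and $t_{\mathrm{aff}}(n)=\max\{t([\pi]):\pi\in S(\mathbb{Z}_n)\text{ affine}\}$. $\varphi$ is Euler's totient function ($\varphi(1)=1$), and $\lambda(2^m)$ is the maximum order of an element of $\mathbb{Z}_{2^m}^\times$: $\lambda(2^m)=\varphi(2^m)$ for $m\leq 2$ and $\lambda(2^m)=\varphi(2^m)/2$ for $m\geq 3$. *)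

theory Defs
  imports "HOL-Number_Theory.Number_Theory" "HOL-Library.FuncSet"
begin

text \<open>Z_n is modelled as {0..<n} with arithmetic mod n; a permutation of Z_n
  is a function nat => nat restricted to {0..<n}.\<close>

definition orbit_of :: "(nat \<Rightarrow> nat) \<Rightarrow> nat \<Rightarrow> nat set" where
  "orbit_of \<pi> x = {(\<pi> ^^ k) x | k. True}"

definition cyc :: "nat \<Rightarrow> (nat \<Rightarrow> nat) \<Rightarrow> nat" where
  "cyc n \<pi> = card (orbit_of \<pi> ` {0..<n})"

definition t_perm :: "nat \<Rightarrow> (nat \<Rightarrow> nat) \<Rightarrow> nat" where
  "t_perm n \<pi> = n - cyc n \<pi>"

definition shift_class :: "nat \<Rightarrow> (nat \<Rightarrow> nat) \<Rightarrow> (nat \<Rightarrow> nat) set" where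
  "shift_class n \<pi> = {(\<lambda>x. \<pi> ((x + b) mod n)) | b. b < n}"

definition t_class :: "nat \<Rightarrow> (nat \<Rightarrow> nat) \<Rightarrow> nat" where
  "t_class n \<pi> = Min (t_perm n ` shift_class n \<pi>)"

definition affine_perms :: "nat \<Rightarrow> (nat \<Rightarrow> nat) set" where
  "affine_perms n = {(\<lambda>x. (a * x + b) mod n) | a b. a < n \<and> b < n \<and> coprime a n}"

definition t_aff :: "nat \<Rightarrow> nat" where
  "t_aff n = Max (t_class n ` affine_perms n)"

definition lambda2 :: "nat \<Rightarrow> nat" where
  "lambda2 m = (if m \<le> 2 then totient (2 ^ m) else totient (2 ^ m) div 2)"

text \<open>The entry of the lcm belonging to prime p with exponent m:
  lambda(2^m) for p = 2, phi(p^m) for odd p.\<close>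
definition lcm_entry :: "nat \<Rightarrow> nat \<Rightarrow> nat" where
  "lcm_entry p m = (if p = 2 then lambda2 m else totient (p ^ m))"

end

theory Submission
  imports Defs
begin

definition per :: "(nat \<Rightarrow> nat) \<Rightarrow> nat \<Rightarrow> nat" where
  "per \<pi> x = (LEAST k. k > 0 \<and> (\<pi> ^^ k) x = x)"

lemma funpow_fix_mult:
  assumes "(\<pi> ^^ L) x = x"
  shows "(\<pi> ^^ (L * q)) x = x"
proof (induction q)
  case 0 then show ?case by simp
next
  case (Suc q)
  have "(\<pi> ^^ (L * Suc q)) x = (\<pi> ^^ L) ((\<pi> ^^ (L * q)) x)"
    by (simp add: funpow_add)
  then show ?case using Suc assms by simp
qed

lemma per_basic:
  assumes "L > 0" "(\<pi> ^^ L) x = x"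
  shows "per \<pi> x > 0 \<and> (\<pi> ^^ per \<pi> x) x = x"
proof -
  have ex: "\<exists>k. k > 0 \<and> (\<pi> ^^ k) x = x" using assms by blast
  show ?thesis unfolding per_def by (rule LeastI_ex[OF ex])
qed

lemma per_least:
  assumes "k > 0" "(\<pi> ^^ k) x = x"
  shows "per \<pi> x \<le> k"
  unfolding per_def using assms by (intro Least_le) auto

lemma funpow_mod_per:
  assumes "L > 0" "(\<pi> ^^ L) x = x"
  shows "(\<pi> ^^ k) x = (\<pi> ^^ (k mod per \<pi> x)) x"
proof -
  define p where "p = per \<pi> x"
  have "(\<pi> ^^ k) x = (\<pi> ^^ (k mod p + p * (k div p))) x" by simp
  also have "\<dots> = (\<pi> ^^ (k mod p)) ((\<pi> ^^ (p * (k div p))) x)" by (simp only: funpow_add comp_apply)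
  also have "(\<pi> ^^ (p * (k div p))) x = x"
    using per_basic[OF assms] funpow_fix_mult[where \<pi>=\<pi> and L=p and x=x and q="k div p"] unfolding p_def by simp
  finally show ?thesis unfolding p_def .
qed

lemma per_dvd_iff:
  assumes "L > 0" "(\<pi> ^^ L) x = x"
  shows "(\<pi> ^^ k) x = x \<longleftrightarrow> per \<pi> x dvd k"
proof
  assume k: "(\<pi> ^^ k) x = x"
  define p where "p = per \<pi> x"
  have P: "p > 0" using per_basic[OF assms] p_def by simp
  have kk: "(\<pi> ^^ (k mod p)) x = x" using k funpow_mod_per[OF assms, of k] p_def by simp
  have "k mod p = 0"
  proof (rule ccontr)
    assume "k mod p \<noteq> 0"
    then have "p \<le> k mod p" using kk per_least p_def by auto
    moreover have "k mod p < p" using P by simp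
    ultimately show False by simp
  qed
  then show "per \<pi> x dvd k" unfolding p_def by (simp add: dvd_eq_mod_eq_0)
next
  assume "per \<pi> x dvd k"
  then obtain q where "k = per \<pi> x * q" by blast
  then show "(\<pi> ^^ k) x = x" using per_basic[OF assms] funpow_fix_mult[where \<pi>=\<pi> and L="per \<pi> x" and x=x and q=q] by simp
qed

lemma orbit_card:
  assumes "L > 0" "(\<pi> ^^ L) x = x"
  shows "orbit_of \<pi> x = (\<lambda>k. (\<pi> ^^ k) x) ` {..<per \<pi> x}"
    and "card (orbit_of \<pi> x) = per \<pi> x"
proof -
  define p where "p = per \<pi> x"
  have P: "p > 0" "(\<pi> ^^ p) x = x" using per_basic[OF assms] p_def by auto
  show 1: "orbit_of \<pi> x = (\<lambda>k. (\<pi> ^^ k) x) ` {..<per \<pi> x}"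
  proof
    show "orbit_of \<pi> x \<subseteq> (\<lambda>k. (\<pi> ^^ k) x) ` {..<per \<pi> x}"
    proof
      fix y assume "y \<in> orbit_of \<pi> x"
      then obtain k where y: "y = (\<pi> ^^ k) x" unfolding orbit_of_def by blast
      have "y = (\<pi> ^^ (k mod p)) x" using y funpow_mod_per[OF assms] p_def by simp
      moreover have "k mod p < p" using P by simp
      ultimately show "y \<in> (\<lambda>k. (\<pi> ^^ k) x) ` {..<per \<pi> x}" using p_def by auto
    qed
  qed (auto simp: orbit_of_def)
  have inj: "inj_on (\<lambda>k. (\<pi> ^^ k) x) {..<p}"
  proof -
    have no: False if "i < j" "j < p" "(\<pi> ^^ i) x = (\<pi> ^^ j) x" for i j
    proof -
      have "(\<pi> ^^ (p - j + i)) x = (\<pi> ^^ (p - j)) ((\<pi> ^^ i) x)" by (simp add: funpow_add)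
      also have "\<dots> = (\<pi> ^^ (p - j)) ((\<pi> ^^ j) x)" using that by simp
      also have "\<dots> = (\<pi> ^^ (p - j + j)) x" by (simp add: funpow_add)
      also have "p - j + j = p" using that by simp
      finally have "(\<pi> ^^ (p - j + i)) x = x" using P by simp
      then have "p \<le> p - j + i" using per_least[of "p - j + i" \<pi> x] p_def that by simp
      then show False using that by simp
    qed
    show ?thesis
    proof (rule inj_onI)
      fix i j assume "i \<in> {..<p}" "j \<in> {..<p}" "(\<pi> ^^ i) x = (\<pi> ^^ j) x"
      then show "i = j" using no[of i j] no[of j i] by (cases i j rule: linorder_cases) auto
    qed
  qed
  show "card (orbit_of \<pi> x) = per \<pi> x"
    using 1 card_image[OF inj] p_def by simp
qed


lemma funpow_lt:
  assumes "\<forall>x<n. \<pi> x < n" "x < n"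
  shows "(\<pi> ^^ k) x < n"
  by (induction k) (use assms in auto)

lemma orbit_sub:
  assumes "\<forall>x<n. \<pi> x < n" "x < n"
  shows "orbit_of \<pi> x \<subseteq> {..<n}"
  using funpow_lt[OF assms] unfolding orbit_of_def by auto

lemma self_in_orbit: "x \<in> orbit_of \<pi> x"
  unfolding orbit_of_def by (auto intro: exI[of _ 0])

lemma orbit_eq:
  assumes "L > 0" "\<forall>x<n. (\<pi> ^^ L) x = x" "x < n" "y \<in> orbit_of \<pi> x"
  shows "orbit_of \<pi> y = orbit_of \<pi> x"
proof -
  obtain j where y: "y = (\<pi> ^^ j) x" using assms(4) unfolding orbit_of_def by blast
  have xL: "(\<pi> ^^ (L * j)) x = x"
    using funpow_fix_mult[where \<pi>=\<pi> and L=L and x=x and q=j] assms by simp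
  show ?thesis
  proof
    show "orbit_of \<pi> y \<subseteq> orbit_of \<pi> x"
    proof
      fix z assume "z \<in> orbit_of \<pi> y"
      then obtain k where "z = (\<pi> ^^ k) y" unfolding orbit_of_def by blast
      then have "z = (\<pi> ^^ (k + j)) x" using y by (simp add: funpow_add)
      then show "z \<in> orbit_of \<pi> x" unfolding orbit_of_def by blast
    qed
  next
    show "orbit_of \<pi> x \<subseteq> orbit_of \<pi> y"
    proof
      fix z assume "z \<in> orbit_of \<pi> x"
      then obtain k where z: "z = (\<pi> ^^ k) x" unfolding orbit_of_def by blast
      have jj: "j \<le> L * j" using assms(1) by (cases L) auto
      have "(\<pi> ^^ (k + L * j - j)) y = (\<pi> ^^ (k + L * j - j + j)) x" using y by (simp add: funpow_add)
      also have "k + L * j - j + j = k + L * j" using jj by arith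
      also have "(\<pi> ^^ (k + L * j)) x = (\<pi> ^^ k) ((\<pi> ^^ (L * j)) x)" by (simp only: funpow_add comp_apply)
      also have "\<dots> = z" using xL z by simp
      finally show "z \<in> orbit_of \<pi> y" unfolding orbit_of_def by blast
    qed
  qed
qed

lemma cyc_sum:
  assumes "\<forall>x<n. \<pi> x < n" "L > 0" "\<forall>x<n. (\<pi> ^^ L) x = x"
  shows "real (cyc n \<pi>) = (\<Sum>x<n. 1 / real (card (orbit_of \<pi> x)))"
proof -
  let ?O = "orbit_of \<pi>"
  have "(\<Sum>x<n. 1 / real (card (?O x))) =
      (\<Sum>Q\<in>?O ` {..<n}. \<Sum>x\<in>{x\<in>{..<n}. ?O x = Q}. 1 / real (card (?O x)))"
    by (rule sum.image_gen) simp
  also have "\<dots> = (\<Sum>Q\<in>?O ` {..<n}. 1)"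
  proof (rule sum.cong[OF refl])
    fix Q assume "Q \<in> ?O ` {..<n}"
    then obtain y where y: "y < n" "Q = ?O y" by auto
    have sub: "?O y \<subseteq> {..<n}" using orbit_sub[OF assms(1) y(1)] .
    have fin: "finite (?O y)" using sub finite_subset by blast
    have ne: "card (?O y) > 0" using fin self_in_orbit[of y \<pi>] card_gt_0_iff by blast
    have eqs: "{x\<in>{..<n}. ?O x = Q} = ?O y"
    proof
      show "{x\<in>{..<n}. ?O x = Q} \<subseteq> ?O y" using self_in_orbit y by blast
      show "?O y \<subseteq> {x\<in>{..<n}. ?O x = Q}"
        using sub orbit_eq[OF assms(2,3) y(1)] y by auto
    qed
    have "(\<Sum>x\<in>{x\<in>{..<n}. ?O x = Q}. 1 / real (card (?O x))) = (\<Sum>x\<in>?O y. 1 / real (card (?O y)))"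
      unfolding eqs using y orbit_eq[OF assms(2,3) y(1)] by (intro sum.cong refl) auto
    also have "\<dots> = 1" using ne by simp
    finally show "(\<Sum>x\<in>{x\<in>{..<n}. ?O x = Q}. 1 / real (card (?O x))) = 1" .
  qed
  also have "\<dots> = real (cyc n \<pi>)" unfolding cyc_def by (simp add: atLeast0LessThan)
  finally show ?thesis by simp
qed

lemma card_dvd_below:
  assumes "p > 0" "p dvd L"
  shows "card {k\<in>{..<L}. p dvd k} = L div p"
proof -
  have "{k\<in>{..<L}. p dvd k} = (\<lambda>j. p * j) ` {..<L div p}"
  proof
    show "{k\<in>{..<L}. p dvd k} \<subseteq> (\<lambda>j. p * j) ` {..<L div p}"
    proof
      fix k assume k: "k \<in> {k\<in>{..<L}. p dvd k}"
      then obtain j where j: "k = p * j" by auto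
      have "j < L div p" using k j assms
        by (metis dvd_mult_div_cancel lessThan_iff mem_Collect_eq mult_less_cancel1)
      then show "k \<in> (\<lambda>j. p * j) ` {..<L div p}" using j by auto
    qed
    show "(\<lambda>j. p * j) ` {..<L div p} \<subseteq> {k\<in>{..<L}. p dvd k}"
    proof
      fix k assume "k \<in> (\<lambda>j. p * j) ` {..<L div p}"
      then obtain j where j: "j < L div p" "k = p * j" by auto
      have "p * j < p * (L div p)" using j(1) assms(1) by (subst mult_less_cancel1) simp
      also have "\<dots> = L" using assms by simp
      finally show "k \<in> {k\<in>{..<L}. p dvd k}" using j by auto
    qed
  qed
  moreover have "inj_on (\<lambda>j. p * j) {..<L div p}" using assms by (auto simp: inj_on_def)
  ultimately show ?thesis by (simp add: card_image)
qed

lemma burnside: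
  assumes "\<forall>x<n. \<pi> x < n" "L > 0" "\<forall>x<n. (\<pi> ^^ L) x = x"
  shows "real L * real (cyc n \<pi>) = real (\<Sum>k<L. card {x\<in>{..<n}. (\<pi> ^^ k) x = x})"
proof -
  have c: "card {x\<in>A. P x} = (\<Sum>x\<in>A. if P x then 1 else 0 :: nat)" if "finite A" for A :: "nat set" and P
    using that by (simp add: sum.If_cases Int_def)
  have "(\<Sum>k<L. card {x\<in>{..<n}. (\<pi> ^^ k) x = x}) = (\<Sum>k<L. \<Sum>x<n. if (\<pi> ^^ k) x = x then 1 else 0 :: nat)"
    by (rule sum.cong[OF refl], rule c) simp
  also have "\<dots> = (\<Sum>x<n. \<Sum>k<L. if (\<pi> ^^ k) x = x then 1 else 0 :: nat)"
    by (rule sum.swap)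
  also have "\<dots> = (\<Sum>x<n. card {k\<in>{..<L}. (\<pi> ^^ k) x = x})"
    by (rule sum.cong[OF refl], rule c[symmetric]) simp
  also have "\<dots> = (\<Sum>x<n. L div per \<pi> x)"
  proof (rule sum.cong[OF refl])
    fix x assume "x \<in> {..<n}"
    then have xL: "(\<pi> ^^ L) x = x" using assms by auto
    have "{k\<in>{..<L}. (\<pi> ^^ k) x = x} = {k\<in>{..<L}. per \<pi> x dvd k}"
      using per_dvd_iff[OF assms(2) xL] by auto
    moreover have "per \<pi> x dvd L" using per_dvd_iff[OF assms(2) xL] xL by auto
    ultimately show "card {k\<in>{..<L}. (\<pi> ^^ k) x = x} = L div per \<pi> x"
      using card_dvd_below per_basic[OF assms(2) xL] by simp
  qed
  finally have "real (\<Sum>k<L. card {x\<in>{..<n}. (\<pi> ^^ k) x = x}) = (\<Sum>x<n. real (L div per \<pi> x))"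
    by simp
  also have "\<dots> = (\<Sum>x<n. real L * (1 / real (card (orbit_of \<pi> x))))"
  proof (rule sum.cong[OF refl])
    fix x assume "x \<in> {..<n}"
    then have xL: "(\<pi> ^^ L) x = x" using assms by auto
    have "per \<pi> x dvd L" using per_dvd_iff[OF assms(2) xL] xL by auto
    then show "real (L div per \<pi> x) = real L * (1 / real (card (orbit_of \<pi> x)))"
      using orbit_card(2)[OF assms(2) xL] by (simp add: real_of_nat_div)
  qed
  also have "\<dots> = real L * real (cyc n \<pi>)"
    using cyc_sum[OF assms] by (simp add: sum_distrib_left)
  finally show ?thesis by simp
qed


lemma exists_period:
  fixes n :: nat and \<pi> :: "nat \<Rightarrow> nat"
  assumes "\<forall>x<n. \<pi> x < n" "inj_on \<pi> {..<n}"
  shows "\<exists>L>0. \<forall>x<n. (\<pi> ^^ L) x = x"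
proof -
  have surj: "\<pi> ` {..<n} = {..<n}"
  proof -
    have "\<pi> ` {..<n} \<subseteq> {..<n}" using assms(1) by auto
    then show ?thesis by (rule endo_inj_surj[OF finite_lessThan _ assms(2)])
  qed
  have psurj: "(\<pi> ^^ i) ` {..<n} = {..<n}" for i
  proof (induction i)
    case (Suc i)
    have "(\<pi> ^^ Suc i) ` {..<n} = \<pi> ` ((\<pi> ^^ i) ` {..<n})" by (simp add: image_comp)
    then show ?case using Suc surj by simp
  qed simp
  define F where "F k = restrict (\<lambda>x. (\<pi> ^^ k) x) {..<n}" for k
  have Fk: "F k \<in> {..<n} \<rightarrow>\<^sub>E {..<n}" for k
    unfolding F_def restrict_PiE_iff using funpow_lt[OF assms(1)] by blast
  have "F ` UNIV \<subseteq> {..<n} \<rightarrow>\<^sub>E {..<n}"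
    using Fk by blast
  then have fin: "finite (F ` UNIV)" by (rule finite_subset) (simp add: finite_PiE)
  have "\<not> inj F"
  proof
    assume "inj F"
    then have "finite (UNIV :: nat set)" using fin finite_imageD[of F UNIV] by simp
    then show False by simp
  qed
  then obtain i j where ij: "i \<noteq> j" "F i = F j" unfolding inj_def by blast
  define i' j' where "i' = min i j" and "j' = max i j"
  have lt: "i' < j'" using ij unfolding i'_def j'_def by auto
  have eq: "(\<pi> ^^ i') x = (\<pi> ^^ j') x" if "x < n" for x
  proof -
    have "F i' = F j'" using ij unfolding i'_def j'_def by (cases "i \<le> j") (auto simp: min_def max_def)
    then have "F i' x = F j' x" by simp
    then show ?thesis using that unfolding F_def by simp
  qed
  have "(\<pi> ^^ (j' - i')) x = x" if "x < n" for x
  proof -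
    have "x \<in> (\<pi> ^^ i') ` {..<n}" using psurj[of i'] that by simp
    then obtain y where y: "y < n" "x = (\<pi> ^^ i') y" by auto
    have "(\<pi> ^^ (j' - i')) x = (\<pi> ^^ (j' - i' + i')) y" using y by (simp add: funpow_add)
    also have "j' - i' + i' = j'" using lt by simp
    finally show ?thesis using eq[OF y(1)] y by simp
  qed
  then show ?thesis using lt by (intro exI[of _ "j' - i'"]) auto
qed

definition aff :: "nat \<Rightarrow> nat \<Rightarrow> nat \<Rightarrow> nat \<Rightarrow> nat" where
  "aff n a b = (\<lambda>x. (a * x + b) mod n)"

lemma aff_lt: "n > 0 \<Longrightarrow> \<forall>x<n. aff n a b x < n"
  by (simp add: aff_def)

lemma aff_inj:
  assumes "coprime a n"
  shows "inj_on (aff n a b) {..<n}"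
proof (rule inj_onI)
  fix x y assume xy: "x \<in> {..<n}" "y \<in> {..<n}" "aff n a b x = aff n a b y"
  then have "[a * x + b = a * y + b] (mod n)" by (simp add: aff_def cong_def)
  then have "[a * x = a * y] (mod n)" by (simp add: cong_add_rcancel_nat)
  then have "[x = y] (mod n)" using assms by (simp add: cong_mult_lcancel_nat coprime_commute)
  then show "x = y" using xy by (simp add: cong_def)
qed

lemma aff_pow: "\<exists>c. \<forall>x<n. (aff n a b ^^ k) x = (a ^ k * x + c) mod n"
proof (induction k)
  case 0
  show ?case by (intro exI[of _ 0]) simp
next
  case (Suc k)
  then obtain c where c: "\<forall>x<n. (aff n a b ^^ k) x = (a ^ k * x + c) mod n" by blast
  have "(aff n a b ^^ Suc k) x = (a ^ Suc k * x + (a * c + b)) mod n" if "x < n" for x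
  proof -
    have "(aff n a b ^^ Suc k) x = (a * ((a ^ k * x + c) mod n) + b) mod n"
      using c that by (simp add: aff_def)
    also have "\<dots> = (a * (a ^ k * x + c) + b) mod n" by (metis mod_add_left_eq mod_mult_right_eq)
    also have "a * (a ^ k * x + c) + b = a ^ Suc k * x + (a * c + b)" by (simp add: algebra_simps)
    finally show ?thesis .
  qed
  then show ?case by blast
qed

lemma aff0_pow: "x < n \<Longrightarrow> (aff n a 0 ^^ k) x = (a ^ k * x) mod n"
proof (induction k)
  case (Suc k)
  then have "(aff n a 0 ^^ Suc k) x = (a * ((a ^ k * x) mod n)) mod n" by (simp add: aff_def)
  also have "\<dots> = (a ^ Suc k * x) mod n" by (simp add: mod_simps algebra_simps)
  finally show ?case .
qed simp

lemma fix_iff_dvd: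
  assumes "x < (n::nat)"
  shows "(A * x + c) mod n = x \<longleftrightarrow> int n dvd int A * int x + int c - int x"
proof -
  have "(A * x + c) mod n = x \<longleftrightarrow> (A * x + c) mod n = x mod n" using assms by simp
  also have "\<dots> \<longleftrightarrow> int (A * x + c) mod int n = int x mod int n"
    by (metis of_nat_eq_iff of_nat_mod)
  also have "\<dots> \<longleftrightarrow> int n dvd int (A * x + c) - int x" by (rule mod_eq_dvd_iff)
  finally show ?thesis by simp
qed

lemma fix_le:
  fixes n A c :: nat
  assumes "n > 0"
  shows "card {x\<in>{..<n}. (A * x + c) mod n = x} \<le> card {x\<in>{..<n}. (A * x + 0) mod n = x}"
proof (cases "{x\<in>{..<n}. (A * x + c) mod n = x} = {}")
  case True show ?thesis unfolding True by simp
next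
  case False
  then obtain x0 where x0: "x0 < n" "(A * x0 + c) mod n = x0" by auto
  have x0d: "int n dvd int A * int x0 + int c - int x0" using x0 fix_iff_dvd by blast
  define h where "h x = nat ((int x - int x0) mod int n)" for x
  have hi: "int (h x) = (int x - int x0) mod int n" for x
    unfolding h_def using assms by simp
  have hd: "int n dvd int (h x) - (int x - int x0)" for x
    unfolding hi by (simp add: mod_eq_dvd_iff[symmetric])
  have hlt: "h x < n" for x
    using hi[of x] assms by (metis of_nat_less_iff pos_mod_bound of_nat_0_less_iff)
  show ?thesis
  proof (rule card_inj_on_le)
    show "inj_on h {x\<in>{..<n}. (A * x + c) mod n = x}"
    proof (rule inj_onI)
      fix x y assume xy: "x \<in> {x\<in>{..<n}. (A * x + c) mod n = x}" "y \<in> {x\<in>{..<n}. (A * x + c) mod n = x}"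
        "h x = h y"
      have "int n dvd (int x - int x0) - (int y - int x0)"
        using arg_cong[OF xy(3), of int] unfolding hi by (simp add: mod_eq_dvd_iff)
      then have "int x mod int n = int y mod int n" by (simp add: mod_eq_dvd_iff)
      then show "x = y" using xy by (simp add: of_nat_mod[symmetric])
    qed
    show "h ` {x\<in>{..<n}. (A * x + c) mod n = x} \<subseteq> {x\<in>{..<n}. (A * x + 0) mod n = x}"
    proof
      fix z assume "z \<in> h ` {x\<in>{..<n}. (A * x + c) mod n = x}"
      then obtain x where x: "x < n" "(A * x + c) mod n = x" "z = h x" by auto
      have xd: "int n dvd int A * int x + int c - int x" using x fix_iff_dvd by blast
      have e: "int A * int (h x) + int 0 - int (h x) =
          (int A - 1) * (int (h x) - (int x - int x0)) + ((int A * int x + int c - int x) - (int A * int x0 + int c - int x0))"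
        by (simp add: algebra_simps)
      have "int n dvd int A * int (h x) + int 0 - int (h x)"
        unfolding e by (rule dvd_add[OF dvd_mult[OF hd[of x]] dvd_diff[OF xd x0d]])
      then have "(A * h x + 0) mod n = h x" using fix_iff_dvd hlt by blast
      then show "z \<in> {x\<in>{..<n}. (A * x + 0) mod n = x}" using x hlt by auto
    qed
  qed simp
qed


lemma cyc_cong:
  fixes n :: nat and \<sigma> \<tau> :: "nat \<Rightarrow> nat"
  assumes "\<forall>x<n. \<sigma> x = \<tau> x" "\<forall>x<n. \<tau> x < n"
  shows "cyc n \<sigma> = cyc n \<tau>"
proof -
  have p: "(\<sigma> ^^ k) x = (\<tau> ^^ k) x" if "x < n" for x k
  proof (induction k)
    case (Suc k)
    have "(\<tau> ^^ k) x < n" using funpow_lt[OF assms(2) that] .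
    then show ?case using Suc assms(1) by simp
  qed simp
  have "orbit_of \<sigma> x = orbit_of \<tau> x" if "x < n" for x
    unfolding orbit_of_def using p[OF that] by simp
  then show ?thesis unfolding cyc_def by (intro arg_cong[where f=card] image_cong) auto
qed

lemma cyc_aff_le:
  fixes n a b :: nat
  assumes "n > 0" "coprime a n"
  shows "cyc n (aff n a b) \<le> cyc n (aff n a 0)"
proof -
  let ?f = "aff n a b" and ?g = "aff n a 0"
  obtain L1 where L1: "L1 > 0" "\<forall>x<n. (?f ^^ L1) x = x"
    using exists_period[OF aff_lt[OF assms(1)] aff_inj[OF assms(2)]] by blast
  obtain L2 where L2: "L2 > 0" "\<forall>x<n. (?g ^^ L2) x = x"
    using exists_period[OF aff_lt[OF assms(1)] aff_inj[OF assms(2)]] by blast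
  define L where "L = L1 * L2"
  have L: "L > 0" using L1 L2 L_def by simp
  have fL: "\<forall>x<n. (?f ^^ L) x = x"
    using L1 funpow_fix_mult[where \<pi>="?f" and L=L1 and q=L2] unfolding L_def by blast
  have gL: "\<forall>x<n. (?g ^^ L) x = x"
    using L2 funpow_fix_mult[where \<pi>="?g" and L=L2 and q=L1] unfolding L_def by (simp add: mult.commute)
  have le: "card {x\<in>{..<n}. (?f ^^ k) x = x} \<le> card {x\<in>{..<n}. (?g ^^ k) x = x}" for k
  proof -
    obtain c where c: "\<forall>x<n. (?f ^^ k) x = (a ^ k * x + c) mod n" using aff_pow by blast
    have "{x\<in>{..<n}. (?f ^^ k) x = x} = {x\<in>{..<n}. (a ^ k * x + c) mod n = x}" using c by auto
    moreover have "{x\<in>{..<n}. (?g ^^ k) x = x} = {x\<in>{..<n}. (a ^ k * x + 0) mod n = x}"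
      using aff0_pow by auto
    ultimately show ?thesis using fix_le[OF assms(1)] by simp
  qed
  have "real L * real (cyc n ?f) \<le> real L * real (cyc n ?g)"
    unfolding burnside[OF aff_lt[OF assms(1)] L fL] burnside[OF aff_lt[OF assms(1)] L gL]
    using le by (simp add: sum_mono)
  then show ?thesis using L by simp
qed

lemma orbit_aff0_card:
  fixes n a x :: nat
  assumes "n > 0" "coprime a n" "x < n"
  shows "card (orbit_of (aff n a 0) x) = ord (n div gcd x n) a"
proof -
  let ?g = "aff n a 0"
  define d where "d = n div gcd x n"
  define x' where "x' = x div gcd x n"
  define g where "g = gcd x n"
  have gpos: "g > 0" using assms g_def by simp
  have n_eq: "n = d * g" unfolding d_def g_def by simp
  have x_eq: "x = x' * g" unfolding x'_def g_def by simp
  have cop: "coprime x' d" unfolding x'_def d_def using div_gcd_coprime[of x n] assms by simp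
  have "d dvd n" using n_eq by simp
  then have copd: "coprime a d" using assms(2) coprime_imp_coprime dvd_trans by blast
  obtain L where L: "L > 0" "\<forall>x<n. (?g ^^ L) x = x"
    using exists_period[OF aff_lt[OF assms(1)] aff_inj[OF assms(2)]] by blast
  have xL: "(?g ^^ L) x = x" using L assms by simp
  have key: "(?g ^^ k) x = x \<longleftrightarrow> ord d a dvd k" for k
  proof -
    have "(?g ^^ k) x = x \<longleftrightarrow> (a ^ k * x) mod n = x mod n" using aff0_pow assms by simp
    also have "\<dots> \<longleftrightarrow> ((a ^ k * x') * g) mod (d * g) = (x' * g) mod (d * g)"
      using n_eq x_eq by (simp add: mult.assoc)
    also have "\<dots> \<longleftrightarrow> (a ^ k * x') mod d = x' mod d"
      using gpos by (simp add: mod_mult_mult2)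
    also have "\<dots> \<longleftrightarrow> [a ^ k * x' = 1 * x'] (mod d)" by (simp add: cong_def)
    also have "\<dots> \<longleftrightarrow> [a ^ k = 1] (mod d)" using cong_mult_rcancel_nat[OF cop, of "a ^ k" 1] by simp
    also have "\<dots> \<longleftrightarrow> ord d a dvd k" by (simp add: ord_divides')
    finally show ?thesis .
  qed
  have "per ?g x = ord d a"
  proof (rule dvd_antisym)
    show "per ?g x dvd ord d a"
      using per_dvd_iff[OF L(1) xL, of "ord d a"] key[of "ord d a"] by simp
    show "ord d a dvd per ?g x"
      using per_basic[OF L(1) xL] key[of "per ?g x"] by simp
  qed
  then show ?thesis using orbit_card(2)[OF L(1) xL] d_def by simp
qed

lemma cyc_aff0_sum:
  fixes n a :: nat
  assumes "n > 0" "coprime a n"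
  shows "real (cyc n (aff n a 0)) = (\<Sum>x<n. 1 / real (ord (n div gcd x n) a))"
proof -
  obtain L where L: "L > 0" "\<forall>x<n. (aff n a 0 ^^ L) x = x"
    using exists_period[OF aff_lt[OF assms(1)] aff_inj[OF assms(2)]] by blast
  show ?thesis
    unfolding cyc_sum[OF aff_lt[OF assms(1)] L]
    using orbit_aff0_card[OF assms] by (intro sum.cong refl) simp
qed


lemma ord_prime_power_root:
  assumes "prime p"
  shows "\<exists>g. \<forall>m. ord (p ^ m) g = Carmichael (p ^ m)"
proof (cases "p = 2")
  case True
  have "ord (2 ^ m) (3::nat) = Carmichael (2 ^ m)" for m
  proof -
    consider "m = 0" | "m = 1" | "m = 2" | "m \<ge> 3" by linarith
    then show ?thesis
    proof cases
      case 1 then show ?thesis by simp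
    next
      case 2
      have "ord 2 (3::nat) = 1" by (simp add: ord_eq_Suc_0_iff cong_def)
      then show ?thesis using 2 by simp
    next
      case 3 then show ?thesis by simp
    next
      case 4 then show ?thesis by (simp add: ord_twopow_3_5 Carmichael_twopow_ge_8)
    qed
  qed
  then show ?thesis using True by blast
next
  case False
  then have "odd p" using assms primes_dvd_imp_eq two_is_prime_nat by blast
  then obtain g where g: "\<forall>k>0. residue_primroot (p ^ k) g"
    using residue_primroot_odd_prime_power_exists[of p] assms by metis
  have "ord (p ^ m) g = Carmichael (p ^ m)" for m
  proof (cases "m = 0")
    case True then show ?thesis by simp
  next
    case False
    then have r: "residue_primroot (p ^ m) g" using g by simp
    then have "ord (p ^ m) g = totient (p ^ m)" by (simp add: residue_primroot_def)
    also have "\<dots> = Carmichael (p ^ m)" using residue_primroot_Carmichael[OF r] by simp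
    finally show ?thesis .
  qed
  then show ?thesis by blast
qed

lemma coprime_prime_powers:
  fixes p q :: nat
  assumes "prime p" "prime q" "p \<noteq> q"
  shows "coprime (p ^ a) (q ^ b)"
  using primes_coprime[OF assms] by (simp add: coprime_power_left_iff coprime_power_right_iff)

lemma exists_good_unit:
  fixes n :: nat
  assumes "n > 0"
  shows "\<exists>a. coprime a n \<and> (\<forall>d. d dvd n \<longrightarrow> ord d a = Carmichael d)"
proof -
  define P where "P = prime_factors n"
  define k where "k = (\<lambda>p. multiplicity p n)"
  have "\<forall>p\<in>P. \<exists>g. \<forall>m. ord (p ^ m) g = Carmichael (p ^ m)"
    using ord_prime_power_root by (auto simp: P_def)
  then obtain g where g: "\<And>p m. p \<in> P \<Longrightarrow> ord (p ^ m) (g p) = Carmichael (p ^ m)"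
    by metis
  have "\<exists>x. \<forall>i\<in>P. [x = g i] (mod i ^ k i)"
  proof (rule chinese_remainder_nat)
    show "finite P" by (simp add: P_def)
    show "\<forall>i\<in>P. \<forall>j\<in>P. i \<noteq> j \<longrightarrow> coprime (i ^ k i) (j ^ k j)"
      unfolding P_def using coprime_prime_powers in_prime_factors_imp_prime by blast
  qed
  then obtain x where x: "\<And>p. p \<in> P \<Longrightarrow> [x = g p] (mod p ^ k p)" by metis
  have main: "ord d x = Carmichael d" if d: "d dvd n" for d
  proof -
    have d0: "d > 0" using d assms by (auto intro!: Nat.gr0I)
    define Q where "Q = prime_factors d"
    have QP: "Q \<subseteq> P" unfolding Q_def P_def using d assms
      by (metis dvd_prime_factors neq0_conv)
    have mle: "multiplicity p d \<le> k p" for p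
      unfolding k_def using d assms by (intro dvd_imp_multiplicity_le) auto
    have dprod: "d = (\<Prod>p\<in>Q. p ^ multiplicity p d)"
      unfolding Q_def using d0 by (rule prime_factorization_nat)
    have cop: "\<And>i j. i \<in> Q \<Longrightarrow> j \<in> Q \<Longrightarrow> i \<noteq> j \<Longrightarrow>
        coprime (i ^ multiplicity i d) (j ^ multiplicity j d)"
      unfolding Q_def using coprime_prime_powers in_prime_factors_imp_prime by blast
    have "ord d x = (LCM p\<in>Q. ord (p ^ multiplicity p d) x)"
      by (subst dprod, rule ord_modulus_prod_coprime) (use cop in \<open>auto simp: Q_def\<close>)
    also have "(\<lambda>p. ord (p ^ multiplicity p d) x) ` Q = (\<lambda>p. Carmichael (p ^ multiplicity p d)) ` Q"
    proof (rule image_cong[OF refl])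
      fix p assume pQ: "p \<in> Q"
      then have pP: "p \<in> P" using QP by blast
      have "[x = g p] (mod p ^ multiplicity p d)"
        using x[OF pP] le_imp_power_dvd[OF mle[of p]] cong_dvd_modulus_nat by blast
      then have "ord (p ^ multiplicity p d) x = ord (p ^ multiplicity p d) (g p)" by (rule ord_cong)
      also have "\<dots> = Carmichael (p ^ multiplicity p d)" using g[OF pP] .
      finally show "ord (p ^ multiplicity p d) x = Carmichael (p ^ multiplicity p d)" .
    qed
    also have "Lcm \<dots> = Carmichael (\<Prod>p\<in>Q. p ^ multiplicity p d)"
      by (rule Carmichael_prod_coprime[symmetric]) (use cop in \<open>auto simp: Q_def\<close>)
    also have "\<dots> = Carmichael d" using dprod by simp
    finally show ?thesis .
  qed
  have "ord n x > 0" using main[of n] by simp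
  then have "coprime n x" by simp
  then show ?thesis using main by (auto simp: coprime_commute)
qed

lemma ord_le_Carmichael:
  fixes n a d :: nat
  assumes "n > 0" "coprime a n" "d dvd n"
  shows "ord d a \<le> Carmichael d" "ord d a > 0"
proof -
  have d0: "d > 0" using assms by (auto intro!: Nat.gr0I)
  have cop: "coprime d a" using assms coprime_imp_coprime dvd_trans coprime_commute by metis
  show "ord d a > 0" using cop by simp
  show "ord d a \<le> Carmichael d"
  proof (cases "d = 1")
    case True then show ?thesis by simp
  next
    case False
    then have "d > 1" using d0 by simp
    then show ?thesis using ord_dvd_Carmichael[OF _ cop] by (intro dvd_imp_le) auto
  qed
qed


lemma sum_gcd_divisors:
  fixes n :: nat and h :: "nat \<Rightarrow> real"
  assumes "n > 0"
  shows "(\<Sum>x<n. h (n div gcd x n)) = (\<Sum>d | d dvd n. real (totient d) * h d)"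
proof -
  have "(\<Sum>x<n. h (n div gcd x n)) = (\<Sum>x\<in>{0<..n}. h (n div gcd x n))"
  proof (rule sum.reindex_bij_witness[of _ "\<lambda>x. x mod n" "\<lambda>y. if y = 0 then n else y"])
    fix y assume "y \<in> {..<n}"
    then show "(if y = 0 then n else y) mod n = y" "(if y = 0 then n else y) \<in> {0<..n}"
      using assms by auto
    show "h (n div gcd (if y = 0 then n else y) n) = h (n div gcd y n)" by simp
  next
    fix x assume x: "x \<in> {0<..n}"
    then show "(if x mod n = 0 then n else x mod n) = x" "x mod n \<in> {..<n}"
      using assms by (auto simp: le_less)
  qed
  also have "\<dots> = (\<Sum>e\<in>(\<lambda>x. gcd x n) ` {0<..n}. \<Sum>x\<in>{x\<in>{0<..n}. gcd x n = e}. h (n div gcd x n))"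
    by (rule sum.image_gen) simp
  also have "(\<lambda>x. gcd x n) ` {0<..n} = {e. e dvd n}"
  proof
    show "(\<lambda>x. gcd x n) ` {0<..n} \<subseteq> {e. e dvd n}" by auto
    show "{e. e dvd n} \<subseteq> (\<lambda>x. gcd x n) ` {0<..n}"
    proof
      fix e assume "e \<in> {e. e dvd n}"
      then have e: "e dvd n" by simp
      then have "e > 0" "e \<le> n" using assms by (auto intro!: Nat.gr0I dvd_imp_le)
      moreover have "gcd e n = e" using e by (simp add: gcd_nat.absorb1)
      ultimately show "e \<in> (\<lambda>x. gcd x n) ` {0<..n}" by (metis greaterThanAtMost_iff image_eqI)
    qed
  qed
  also have "(\<Sum>e\<in>{e. e dvd n}. \<Sum>x\<in>{x\<in>{0<..n}. gcd x n = e}. h (n div gcd x n)) =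
      (\<Sum>e\<in>{e. e dvd n}. real (totient (n div e)) * h (n div e))"
  proof (rule sum.cong[OF refl])
    fix e assume "e \<in> {e. e dvd n}"
    then have e: "e dvd n" by simp
    have "(\<Sum>x\<in>{x\<in>{0<..n}. gcd x n = e}. h (n div gcd x n)) = (\<Sum>x\<in>{x\<in>{0<..n}. gcd x n = e}. h (n div e))"
      by (rule sum.cong) auto
    also have "\<dots> = real (card {x\<in>{0<..n}. gcd x n = e}) * h (n div e)" by simp
    also have "card {x\<in>{0<..n}. gcd x n = e} = totient (n div e)"
      using card_gcd_eq_totient[OF assms e] .
    finally show "(\<Sum>x\<in>{x\<in>{0<..n}. gcd x n = e}. h (n div gcd x n)) = real (totient (n div e)) * h (n div e)" .
  qed
  also have "\<dots> = (\<Sum>d | d dvd n. real (totient d) * h d)"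
    using assms by (intro sum.reindex_bij_witness[of _ "(div) n" "(div) n"]) (auto elim: dvdE)
  finally show ?thesis .
qed

lemma divisors_PiE:
  fixes n :: nat and G :: "nat \<Rightarrow> real"
  assumes "n > 0"
  shows "(\<Sum>d | d dvd n. G d) =
    (\<Sum>m \<in> (\<Pi>\<^sub>E p \<in> prime_factors n. {0..multiplicity p n}). G (\<Prod>p\<in>prime_factors n. p ^ m p))"
proof -
  let ?P = "prime_factors n"
  let ?E = "\<lambda>m. \<Prod>p\<in>?P. p ^ m p"
  let ?J = "\<lambda>d. restrict (\<lambda>p. multiplicity p d) ?P"
  have primeP: "\<And>p. p \<in> ?P \<Longrightarrow> prime p" by auto
  have multE: "multiplicity q (?E m) = (if q \<in> ?P then m q else 0)" if "prime q" for q m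
    using multiplicity_prod_prime_powers[of ?P q m, OF _ primeP that] by simp
  have E0: "?E m \<noteq> 0" for m using primeP by (auto simp: prime_gt_0_nat)
  show ?thesis
  proof (rule sum.reindex_bij_witness[of _ ?E ?J])
    fix d assume "d \<in> {d. d dvd n}"
    then have d: "d dvd n" by simp
    have d0: "d \<noteq> 0" using d assms by auto
    show "?J d \<in> (\<Pi>\<^sub>E p \<in> ?P. {0..multiplicity p n})"
      using d assms by (auto simp: PiE_def intro!: dvd_imp_multiplicity_le)
    show "?E (?J d) = d"
    proof -
      have "?E (?J d) = (\<Prod>p\<in>?P. p ^ multiplicity p d)" by (intro prod.cong) auto
      also have "\<dots> = d"
      proof (rule multiplicity_eq_nat)
        show "(\<Prod>p\<in>?P. p ^ multiplicity p d) > 0" using primeP by (auto simp: prime_gt_0_nat)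
        show "d > 0" using d0 by simp
        fix q :: nat assume q: "prime q"
        have "multiplicity q (\<Prod>p\<in>?P. p ^ multiplicity p d) = (if q \<in> ?P then multiplicity q d else 0)"
          using multiplicity_prod_prime_powers[of ?P q "\<lambda>p. multiplicity p d", OF _ primeP q] by simp
        moreover have "q \<notin> ?P \<Longrightarrow> multiplicity q d = 0"
        proof -
          assume "q \<notin> ?P"
          then have "\<not> q dvd n" using q assms by (auto simp: in_prime_factors_iff)
          then have "\<not> q dvd d" using d dvd_trans by blast
          then show "multiplicity q d = 0" by (rule not_dvd_imp_multiplicity_0)
        qed
        ultimately show "multiplicity q (\<Prod>p\<in>?P. p ^ multiplicity p d) = multiplicity q d" by auto
      qed
      finally show ?thesis .
    qed
    then show "G (?E (?J d)) = G d" by simp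
  next
    fix m assume m: "m \<in> (\<Pi>\<^sub>E p \<in> ?P. {0..multiplicity p n})"
    show "?J (?E m) = m"
    proof (rule ext)
      fix p show "?J (?E m) p = m p"
        using m multE[of p m] by (cases "p \<in> ?P") (auto simp: PiE_def extensional_def)
    qed
    show "?E m \<in> {d. d dvd n}"
    proof -
      have "?E m dvd n"
      proof (rule multiplicity_le_imp_dvd[OF E0])
        fix q :: nat assume q: "prime q"
        show "multiplicity q (?E m) \<le> multiplicity q n"
          using m multE[OF q, of m] by (auto simp: PiE_def)
      qed
      then show ?thesis by simp
    qed
  qed
qed

lemma totient_prod_pp:
  fixes P :: "nat set"
  assumes "finite P" "\<And>p. p \<in> P \<Longrightarrow> prime p"
  shows "totient (\<Prod>p\<in>P. p ^ m p) = (\<Prod>p\<in>P. totient (p ^ m p))"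
  using assms
proof (induction P rule: finite_induct)
  case (insert q P)
  have "coprime (q ^ m q) (\<Prod>p\<in>P. p ^ m p)"
  proof (rule prod_coprime_right)
    fix p assume "p \<in> P"
    then have "prime p" "prime q" "p \<noteq> q" using insert by auto
    then show "coprime (q ^ m q) (p ^ m p)"
      using primes_coprime[of q p] by (simp add: coprime_power_left_iff coprime_power_right_iff)
  qed
  then show ?case using insert by (simp add: totient_mult_coprime)
qed simp

lemma Carmichael_lcm_entry:
  assumes "prime p"
  shows "Carmichael (p ^ m) = lcm_entry p m"
proof (cases "p = 2")
  case True
  consider "m = 0" | "m > 0" "m \<le> 2" | "m \<ge> 3" by linarith
  then show ?thesis
  proof cases
    case 1 then show ?thesis using True by (simp add: lcm_entry_def lambda2_def)
  next
    case 2
    then show ?thesis using True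
      by (simp add: lcm_entry_def lambda2_def Carmichael_twopow totient_prime_power)
  next
    case 3
    have "totient (2 ^ m) div 2 = 2 ^ (m - 2)"
    proof -
      have "totient ((2::nat) ^ m) = 2 ^ (m - 1)" using 3 by (simp add: totient_prime_power)
      also have "m - 1 = Suc (m - 2)" using 3 by simp
      also have "(2::nat) ^ Suc (m - 2) = 2 ^ (m - 2) * 2" by simp
      finally show ?thesis by simp
    qed
    then show ?thesis using True 3 by (simp add: lcm_entry_def lambda2_def Carmichael_twopow_ge_8)
  qed
next
  case False
  then have "odd p" using assms primes_dvd_imp_eq two_is_prime_nat by blast
  show ?thesis
  proof (cases "m = 0")
    case True then show ?thesis using False by (simp add: lcm_entry_def)
  next
    case m: False
    then show ?thesis using False Carmichael_odd_prime_power[OF assms \<open>odd p\<close>, of m] assms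
      by (simp add: lcm_entry_def totient_prime_power)
  qed
qed

lemma Carmichael_prod_pp:
  fixes P :: "nat set"
  assumes "finite P" "\<And>p. p \<in> P \<Longrightarrow> prime p"
  shows "Carmichael (\<Prod>p\<in>P. p ^ m p) = Lcm ((\<lambda>p. lcm_entry p (m p)) ` P)"
proof -
  have "Carmichael (\<Prod>p\<in>P. p ^ m p) = Lcm ((\<lambda>p. Carmichael (p ^ m p)) ` P)"
  proof (rule Carmichael_prod_coprime[OF assms(1)])
    fix i j assume "i \<in> P" "j \<in> P" "i \<noteq> j"
    then show "coprime (i ^ m i) (j ^ m j)"
      using primes_coprime[of i j] assms(2) by (simp add: coprime_power_left_iff coprime_power_right_iff)
  qed
  also have "(\<lambda>p. Carmichael (p ^ m p)) ` P = (\<lambda>p. lcm_entry p (m p)) ` P"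
    using Carmichael_lcm_entry assms(2) by (intro image_cong) auto
  finally show ?thesis .
qed


lemma t_class_aff:
  fixes n a b :: nat
  assumes "n > 0" "coprime a n"
  shows "t_class n (aff n a b) = n - cyc n (aff n a 0)"
proof -
  let ?g = "aff n a 0"
  let ?s = "\<lambda>c. (\<lambda>x. aff n a b ((x + c) mod n))"
  have sc: "shift_class n (aff n a b) = ?s ` {..<n}"
    unfolding shift_class_def by auto
  have eqv: "\<forall>x<n. ?s c x = aff n a ((a * c + b) mod n) x" for c
  proof (intro allI impI)
    fix x
    have "(a * ((x + c) mod n) + b) mod n = (a * (x + c) + b) mod n"
      by (metis mod_add_left_eq mod_mult_right_eq)
    also have "\<dots> = (a * x + (a * c + b)) mod n" by (simp add: algebra_simps)
    also have "\<dots> = (a * x + (a * c + b) mod n) mod n" by (simp add: mod_add_right_eq)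
    finally show "?s c x = aff n a ((a * c + b) mod n) x" by (simp add: aff_def)
  qed
  have cyc_c: "cyc n (?s c) = cyc n (aff n a ((a * c + b) mod n))" for c
    by (rule cyc_cong[OF eqv aff_lt[OF assms(1)]])
  have surj: "aff n a b ` {..<n} = {..<n}"
  proof -
    have "aff n a b ` {..<n} \<subseteq> {..<n}" using aff_lt[OF assms(1)] by auto
    then show ?thesis by (rule endo_inj_surj[OF finite_lessThan _ aff_inj[OF assms(2)]])
  qed
  have "0 \<in> aff n a b ` {..<n}" using surj assms(1) by simp
  then obtain c0 where c0: "c0 < n" "aff n a b c0 = 0" by auto
  then have c0': "(a * c0 + b) mod n = 0" by (simp add: aff_def)
  show ?thesis
    unfolding t_class_def sc image_image
  proof (rule Min_eqI)
    show "finite ((\<lambda>c. t_perm n (?s c)) ` {..<n})" by simp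
    fix y assume "y \<in> (\<lambda>c. t_perm n (?s c)) ` {..<n}"
    then obtain c where y: "y = t_perm n (?s c)" by auto
    have "cyc n (?s c) \<le> cyc n ?g"
      unfolding cyc_c by (rule cyc_aff_le[OF assms])
    then show "n - cyc n ?g \<le> y" unfolding y t_perm_def by simp
  next
    have "t_perm n (?s c0) = n - cyc n ?g"
      unfolding t_perm_def cyc_c c0' ..
    then show "n - cyc n ?g \<in> (\<lambda>c. t_perm n (?s c)) ` {..<n}" using c0(1) by force
  qed
qed

lemma cyc_le_n: "cyc n \<pi> \<le> n"
  unfolding cyc_def using card_image_le[of "{0..<n}" "orbit_of \<pi>"] by simp

lemma div_gcd_dvd: "(n::nat) div gcd x n dvd n"
  using dvd_mult_div_cancel[of "gcd x n" n] by (metis dvd_triv_right gcd_dvd2)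

theorem theorem3p4:
  fixes n :: nat
  assumes "n > 0"
  shows "real (t_aff n) = real n -
    (\<Sum>m \<in> (\<Pi>\<^sub>E p \<in> prime_factors n. {0..multiplicity p n}).
       real (\<Prod>p \<in> prime_factors n. totient (p ^ m p)) /
       real (Lcm ((\<lambda>p. lcm_entry p (m p)) ` prime_factors n)))"
proof -
  define F where "F a = cyc n (aff n a 0)" for a
  define S where "S = (\<Sum>x<n. 1 / real (Carmichael (n div gcd x n)))"
  obtain a0 where a0: "coprime a0 n" "\<And>d. d dvd n \<Longrightarrow> ord d a0 = Carmichael d"
    using exists_good_unit[OF assms] by blast
  define a1 where "a1 = a0 mod n"
  have a1: "a1 < n" "coprime a1 n" using a0(1) assms unfolding a1_def by auto
  have a1ord: "ord d a1 = Carmichael d" if "d dvd n" for d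
  proof -
    have "[a1 = a0] (mod n)" unfolding a1_def by simp
    then have "[a1 = a0] (mod d)" using that cong_dvd_modulus_nat by blast
    then show ?thesis using ord_cong a0(2)[OF that] by metis
  qed
  have Fa1: "real (F a1) = S"
    unfolding F_def S_def cyc_aff0_sum[OF assms a1(2)]
    using a1ord div_gcd_dvd by (intro sum.cong refl) simp
  have Fge: "S \<le> real (F a)" if "coprime a n" for a
    unfolding F_def S_def cyc_aff0_sum[OF assms that]
  proof (rule sum_mono)
    fix x assume "x \<in> {..<n}"
    have "ord (n div gcd x n) a \<le> Carmichael (n div gcd x n)" "ord (n div gcd x n) a > 0"
      using ord_le_Carmichael[OF assms that div_gcd_dvd] by auto
    then show "1 / real (Carmichael (n div gcd x n)) \<le> 1 / real (ord (n div gcd x n) a)"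
      by (intro divide_left_mono) auto
  qed
  have taff: "t_aff n = n - F a1"
    unfolding t_aff_def
  proof (rule Max_eqI)
    have "affine_perms n \<subseteq> (\<lambda>(a, b). (\<lambda>x. (a * x + b) mod n)) ` ({..<n} \<times> {..<n})"
      unfolding affine_perms_def by auto
    then have "finite (affine_perms n)" by (rule finite_subset) simp
    then show "finite (t_class n ` affine_perms n)" by simp
  next
    fix y assume "y \<in> t_class n ` affine_perms n"
    then obtain a b where ab: "a < n" "b < n" "coprime a n" "y = t_class n (aff n a b)"
      unfolding affine_perms_def aff_def by auto
    have "y = n - F a" using t_class_aff[OF assms ab(3)] ab(4) F_def by simp
    moreover have "F a1 \<le> F a" using Fge[OF ab(3)] Fa1 by simp
    ultimately show "y \<le> n - F a1" by simp
  next
    have "aff n a1 0 \<in> affine_perms n"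
      unfolding affine_perms_def aff_def using a1 assms
      by (intro CollectI exI[of _ a1] exI[of _ "0::nat"]) simp
    moreover have "t_class n (aff n a1 0) = n - F a1" using t_class_aff[OF assms a1(2)] F_def by simp
    ultimately show "n - F a1 \<in> t_class n ` affine_perms n" by force
  qed
  have "real (t_aff n) = real n - S"
    unfolding taff using cyc_le_n[of n "aff n a1 0"] Fa1 F_def by (simp add: of_nat_diff)
  also have "S = (\<Sum>d | d dvd n. real (totient d) * (1 / real (Carmichael d)))"
    unfolding S_def by (rule sum_gcd_divisors[OF assms])
  also have "\<dots> = (\<Sum>d | d dvd n. real (totient d) / real (Carmichael d))" by simp
  also have "\<dots> = (\<Sum>m \<in> (\<Pi>\<^sub>E p \<in> prime_factors n. {0..multiplicity p n}).
       real (totient (\<Prod>p\<in>prime_factors n. p ^ m p)) / real (Carmichael (\<Prod>p\<in>prime_factors n. p ^ m p)))"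
    by (rule divisors_PiE[OF assms])
  also have "\<dots> = (\<Sum>m \<in> (\<Pi>\<^sub>E p \<in> prime_factors n. {0..multiplicity p n}).
       real (\<Prod>p \<in> prime_factors n. totient (p ^ m p)) /
       real (Lcm ((\<lambda>p. lcm_entry p (m p)) ` prime_factors n)))"
  proof (rule sum.cong[OF refl])
    fix m :: "nat \<Rightarrow> nat"
    have fp: "finite (prime_factors n)" by simp
    have pp: "\<And>p. p \<in> prime_factors n \<Longrightarrow> prime p" by auto
    show "real (totient (\<Prod>p\<in>prime_factors n. p ^ m p)) / real (Carmichael (\<Prod>p\<in>prime_factors n. p ^ m p)) =
       real (\<Prod>p \<in> prime_factors n. totient (p ^ m p)) /
       real (Lcm ((\<lambda>p. lcm_entry p (m p)) ` prime_factors n))"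
      using totient_prod_pp[OF fp pp, of m] Carmichael_prod_pp[OF fp pp, of m] by simp
  qed
  finally show ?thesis .
qed


end
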